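(* Let $(\frac pq,\frac rs)$ be a Farey pair of order $n$ with $s>q\ge 2$, let $d=\lfloor n/q\rfloor$, $\alpha\in(0,1)$, $\beta=1-\alpha$, and $\phi_\alpha(t)=(t^q-\beta)^d-\alpha^dt^{qd-s}$. If $t_1$ and $t_2$ are roots of $\phi_\alpha$ with $|t_1|=|t_2|$, then either $t_2=t_1$ or $t_2=\overline{t_1}$.
   Context: $\mathcal{F}_n=\{p/q:0\le p<q\le n,\ \gcd(p,q)=1\}$; a Farey pair of order $n$ is a pair $(\frac pq,\frac rs)$ of elements of $\mathcal F_n$ with $\frac pq<\frac rs$ and no element of $\mathcal F_n$ strictly between them. $\phi_\alpha$ is regarded as a rational function of $t$. *)

theory Defs
  imports Complex_Main
begin

definition farey :: "nat \<Rightarrow> rat set" where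
  "farey n = {of_nat a / of_nat b | a b. a < b \<and> b \<le> n \<and> coprime a b}"

definition farey_pair :: "nat \<Rightarrow> nat \<Rightarrow> nat \<Rightarrow> nat \<Rightarrow> nat \<Rightarrow> bool" where
  "farey_pair n p q r s \<longleftrightarrow>
     p < q \<and> q \<le> n \<and> coprime p q \<and> r < s \<and> s \<le> n \<and> coprime r s \<and>
     (of_nat p / of_nat q :: rat) < of_nat r / of_nat s \<and>
     \<not> (\<exists>x\<in>farey n. of_nat p / of_nat q < x \<and> x < of_nat r / of_nat s)"

text \<open>phi_alpha(t) = (t^q - beta)^d - alpha^d t^(qd - s), beta = 1 - alpha, as a rational
  function of t (the exponent qd - s is an integer, possibly negative).\<close>
definition phi :: "nat \<Rightarrow> nat \<Rightarrow> nat \<Rightarrow> real \<Rightarrow> complex \<Rightarrow> complex" where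
  "phi q s d \<alpha> t = (t ^ q - complex_of_real (1 - \<alpha>)) ^ d
                    - complex_of_real (\<alpha> ^ d) * t powi (int (q * d) - int s)"

end

theory Submission
  imports Defs
begin

lemma farey_det:
  assumes fp: "farey_pair n p q r s"
  shows "int r * int q - int p * int s = 1"
proof -
  have pq: "p < q" and qn: "q \<le> n" and cpq: "coprime p q" and rs: "r < s" and sn: "s \<le> n"
    and crs: "coprime r s" and lt: "(of_nat p / of_nat q :: rat) < of_nat r / of_nat s"
    and nob: "\<not> (\<exists>x\<in>farey n. of_nat p / of_nat q < x \<and> x < (of_nat r / of_nat s :: rat))"
    using fp unfolding farey_pair_def by auto
  have q0: "q > 0" "s > 0" using pq rs by auto
  have B1: "int p * int s < int r * int q"
  proof -
    from lt q0 have "(of_nat p * of_nat s :: rat) < of_nat r * of_nat q"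
      by (simp add: field_simps)
    hence "(of_nat (p * s) :: rat) < of_nat (r * q)" by simp
    hence "p * s < r * q" by (simp only: of_nat_less_iff)
    thus ?thesis by (metis of_nat_less_iff of_nat_mult)
  qed
  have "gcd (int p) (int q) = 1" using cpq by simp
  then obtain u v where uv: "u * int p + v * int q = 1" using bezout_int by metis
  define k where "k = (int n + u) div int q"
  define y where "y = int q * k - u"
  define x where "x = v + int p * k"
  have ymod: "y = int n - (int n + u) mod int q"
    unfolding y_def k_def by (simp add: minus_mod_eq_mult_div[symmetric] algebra_simps)
  have y1: "y \<le> int n" "y > int n - int q"
    using ymod q0 pos_mod_bound[of "int q" "int n + u"] pos_mod_sign[of "int q" "int n + u"] by auto
  have ypos: "y > 0" using y1 qn by linarith
  have xy: "int q * x - int p * y = 1" unfolding x_def y_def using uv by (simp add: algebra_simps)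
  have xpos: "x > 0"
  proof -
    have "int q * x = 1 + int p * y" using xy by simp
    also have "\<dots> > 0" using ypos by (simp add: add_pos_nonneg)
    finally show ?thesis using q0 by (simp add: zero_less_mult_iff)
  qed
  define A where "A = x * int s - int r * y"
  define B where "B = int r * int q - int p * int s"
  have B1': "B \<ge> 1" using B1 unfolding B_def by simp
  have iden: "int s = int q * A + y * B"
  proof -
    have "int s = int s * (int q * x - int p * y)" using xy by simp
    thus ?thesis unfolding A_def B_def by (simp add: algebra_simps)
  qed
  consider "A > 0" | "A < 0" | "A = 0" by linarith
  then show ?thesis
  proof cases
    case 1
    have "int q * A \<ge> int q" using 1 q0 by simp
    moreover have "y * B \<ge> y" using B1' ypos by simp
    ultimately show ?thesis using iden y1 sn by linarith
  next
    case 2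
    have xs: "x * int s < int r * y" using 2 unfolding A_def by simp
    have "int r * y < int s * y" using rs ypos by simp
    hence "x * int s < y * int s" using xs by (simp add: mult.commute)
    hence xly: "x < y" using q0 by (simp add: mult_less_cancel_right)
    have cxy: "coprime (nat x) (nat y)"
    proof -
      have "coprime x y"
      proof (rule coprimeI)
        fix c assume "c dvd x" "c dvd y"
        hence "c dvd int q * x - int p * y" by (simp add: dvd_diff)
        thus "is_unit c" using xy by simp
      qed
      thus ?thesis using xpos ypos by (simp add: coprime_int_iff[symmetric])
    qed
    have mem: "(of_nat (nat x) / of_nat (nat y) :: rat) \<in> farey n"
      unfolding farey_def using xly y1 cxy xpos ypos by (intro CollectI exI[of _ "nat x"] exI[of _ "nat y"]) auto
    have e1: "(of_nat (nat x) / of_nat (nat y) :: rat) = of_int x / of_int y" using xpos ypos by simp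
    have "(of_nat p / of_nat q :: rat) < of_int x / of_int y"
    proof -
      have "int p * y < int q * x" using xy by simp
      hence "(of_int (int p * y) :: rat) < of_int (int q * x)" by (simp only: of_int_less_iff)
      hence "(of_nat p * of_int y :: rat) < of_nat q * of_int x" by simp
      thus ?thesis using q0 ypos by (simp add: field_simps)
    qed
    moreover have "(of_int x / of_int y :: rat) < of_nat r / of_nat s"
    proof -
      have "(of_int (x * int s) :: rat) < of_int (int r * y)" using xs by (simp only: of_int_less_iff)
      hence "(of_int x * of_nat s :: rat) < of_nat r * of_int y" by simp
      thus ?thesis using q0 ypos by (simp add: field_simps)
    qed
    ultimately show ?thesis using nob mem e1 by auto
  next
    case 3
    have xs: "x * int s = int r * y" using 3 unfolding A_def by simp
    have "int s dvd int r * y" using xs by (metis dvd_triv_right)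
    moreover have "coprime (int s) (int r)" using crs by (simp add: coprime_commute)
    ultimately have "int s dvd y" using coprime_dvd_mult_right_iff by blast
    hence "int s \<le> y" using ypos by (simp add: zdvd_imp_le)
    moreover have "int s = y * B" using iden 3 by simp
    ultimately have "B \<le> 1"
    proof -
      assume h: "int s \<le> y" "int s = y * B"
      show "B \<le> 1"
      proof (rule ccontr)
        assume "\<not> B \<le> 1"
        hence "B \<ge> 2" by simp
        hence "y * B \<ge> y * 2" using ypos by (simp add: mult_left_mono)
        thus False using h ypos by linarith
      qed
    qed
    thus ?thesis using B1' unfolding B_def by simp
  qed
qed

lemma root_abs:
  fixes t :: complex
  assumes "phi q s d \<alpha> t = 0"
  shows "(t ^ q - complex_of_real (1 - \<alpha>)) ^ d = complex_of_real (\<alpha> ^ d) * t powi (int (q * d) - int s)"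
  using assms unfolding phi_def by simp

lemma phi_cnj: "phi q s d \<alpha> (cnj t) = cnj (phi q s d \<alpha> t)"
  unfolding phi_def by (simp add: complex_cnj_power_int)

lemma same_q_power:
  fixes t1 t2 :: complex
  assumes r1: "phi q s d \<alpha> t1 = 0" and r2: "phi q s d \<alpha> t2 = 0"
    and nz: "t1 \<noteq> 0" and q0: "q > 0" and a0: "\<alpha> \<noteq> 0"
    and eq: "t1 ^ q = t2 ^ q" and bez: "a * int q + b * (int (q * d) - int s) = 1"
  shows "t1 = t2"
proof -
  define e where "e = int (q * d) - int s"
  have t2nz: "t2 \<noteq> 0" proof
    assume "t2 = 0"
    hence "t1 ^ q = 0" using eq q0 by (simp add: zero_power)
    thus False using nz by simp
  qed
  define w where "w = t2 / t1"
  have wnz: "w \<noteq> 0" using nz t2nz w_def by simp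
  have wq: "w ^ q = 1" using eq nz t2nz q0 by (simp add: w_def power_divide)
  have "complex_of_real (\<alpha> ^ d) * t1 powi e = complex_of_real (\<alpha> ^ d) * t2 powi e"
    using root_abs[OF r1] root_abs[OF r2] eq unfolding e_def by simp
  hence te: "t1 powi e = t2 powi e" using a0 by simp
  have we: "w powi e = 1" using te nz t2nz unfolding w_def by (simp add: power_int_divide_distrib)
  have wqi: "w powi (int q) = 1" using wq by simp
  have "w = w powi (a * int q + b * e)" using bez e_def by simp
  also have "\<dots> = w powi (a * int q) * w powi (b * e)" using wnz by (simp add: power_int_add)
  also have "\<dots> = 1" using wqi we by (simp add: power_int_mult mult.commute[of a] mult.commute[of b])
  finally show ?thesis unfolding w_def using nz by (simp add: field_simps)
qed


theorem theorem5p2: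
  fixes n p q r s :: nat and \<alpha> :: real and t1 t2 :: complex
  assumes "farey_pair n p q r s"
    and "s > q" and "q \<ge> 2"
    and "0 < \<alpha>" and "\<alpha> < 1"
    and "phi q s (n div q) \<alpha> t1 = 0"
    and "phi q s (n div q) \<alpha> t2 = 0"
    and "norm t1 = norm t2"
  shows "t2 = t1 \<or> t2 = cnj t1"
proof (cases "t1 = 0")
  case True
  then show ?thesis using assms(8) by simp
next
  case False
  define d where "d = n div q"
  define e where "e = int (q * d) - int s"
  define \<beta> where "\<beta> = 1 - \<alpha>"
  have qn: "q \<le> n" using assms(1) unfolding farey_pair_def by simp
  have d0: "d > 0" unfolding d_def using qn assms(3) by (simp add: div_greater_zero_iff)
  have b0: "\<beta> > 0" using assms(5) \<beta>_def by simp
  have det: "int r * int q - int p * int s = 1" using farey_det[OF assms(1)] .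
  have bez: "(int r - int p * int d) * int q + int p * (int (q * d) - int s) = 1"
    using det by (simp add: algebra_simps)
  have r1: "phi q s d \<alpha> t1 = 0" and r2: "phi q s d \<alpha> t2 = 0" using assms(6,7) d_def by auto
  have nrm: "norm (t ^ q - complex_of_real \<beta>) ^ d = \<alpha> ^ d * norm t1 powi e"
    if "phi q s d \<alpha> t = 0" "norm t = norm t1" for t
  proof -
    have "norm ((t ^ q - complex_of_real \<beta>) ^ d) = norm (complex_of_real (\<alpha> ^ d) * t powi e)"
      using root_abs[OF that(1)] unfolding e_def \<beta>_def by simp
    thus ?thesis using that(2) assms(4) by (simp add: norm_mult norm_power norm_power_int)
  qed
  have "norm (t1 ^ q - complex_of_real \<beta>) ^ d = norm (t2 ^ q - complex_of_real \<beta>) ^ d"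
    using nrm[OF r1] nrm[OF r2 assms(8)[symmetric]] by simp
  hence neq: "norm (t1 ^ q - complex_of_real \<beta>) = norm (t2 ^ q - complex_of_real \<beta>)"
    using d0 by (meson norm_ge_zero power_eq_imp_eq_base)
  define w1 where "w1 = t1 ^ q"
  define w2 where "w2 = t2 ^ q"
  have nw: "norm w1 = norm w2" unfolding w1_def w2_def using assms(8) by (simp add: norm_power)
  have sq: "norm (w - complex_of_real \<beta>) ^ 2 = norm w ^ 2 - 2 * \<beta> * Re w + \<beta> ^ 2" for w
    unfolding cmod_power2 by (simp add: power2_eq_square algebra_simps)
  have "norm w1 ^ 2 - 2 * \<beta> * Re w1 + \<beta> ^ 2 = norm w2 ^ 2 - 2 * \<beta> * Re w2 + \<beta> ^ 2"
    using sq[of w1] sq[of w2] neq unfolding w1_def w2_def by simp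
  hence re: "Re w1 = Re w2" using nw b0 by simp
  have "Re w1 ^ 2 + Im w1 ^ 2 = Re w2 ^ 2 + Im w2 ^ 2" using nw by (simp add: cmod_power2[symmetric])
  hence "Im w1 ^ 2 = Im w2 ^ 2" using re by simp
  hence "Im w1 = Im w2 \<or> Im w1 = - Im w2" by (simp add: power2_eq_iff)
  hence "w1 = w2 \<or> w1 = cnj w2" using re by (auto intro: complex_eqI)
  then show ?thesis
  proof
    assume "w1 = w2"
    hence "t1 = t2" using same_q_power[OF r1 r2 False _ _ _ bez] assms(3,4) w1_def w2_def by simp
    thus ?thesis by simp
  next
    assume "w1 = cnj w2"
    hence eqc: "t1 ^ q = cnj t2 ^ q" using w1_def w2_def by simp
    have rc: "phi q s d \<alpha> (cnj t2) = 0" using r2 phi_cnj by simp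
    have "t1 = cnj t2" using same_q_power[OF r1 rc False _ _ eqc bez] assms(3,4) by simp
    thus ?thesis by simp
  qed
qed

end
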